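(* Let $\mathfrak g\xrightarrow{\mu}\mathfrak h$ be a crossed module of Lie algebras, $\phi:W\to V$ linear, $\rho$ a 2-representation on $\phi$, $r\ge1$ and $\omega\in C^{p,q}_r(\mathfrak g_1,\phi)$. Then $(\partial\Delta+\Delta\partial)\omega=0\in C^{p+2,q+1}_{r-1}(\mathfrak g_1,\phi)$.
   Context: Crossed module: Lie algebras $\mathfrak g,\mathfrak h$, Lie homomorphism $\mu$, action $\mathcal L:\mathfrak h\to\mathrm{Der}(\mathfrak g)$ with $\mu(\mathcal L_yx)=[y,\mu(x)]$, $\mathcal L_{\mu(x_0)}x_1=[x_0,x_1]$. 2-representation: linear $\rho_0^1:\mathfrak h\to\mathfrak{gl}(W)$, $\rho_0^0:\mathfrak h\to\mathfrak{gl}(V)$, $\rho_1:\mathfrak g\to\mathrm{Hom}(V,W)$ satisfying the usual axioms (representations, $\phi\rho_0^1(y)=\rho_0^0(y)\phi$, $\rho_1([x_0,x_1])=\rho_1(x_0)\phi\rho_1(x_1)-\rho_1(x_1)\phi\rho_1(x_0)$, $\rho_0^0(\mu(x))=\phi\rho_1(x)$, $\rho_0^1(\mu(x))=\rho_1(x)\phi$, $\rho_1(\mathcal L_yx)=\rho_0^1(y)\rho_1(x)-\rho_1(x)\rho_0^0(y)$). $\mathfrak g_0=\mathfrak h$; for $p\ge1$, $\mathfrak g_p=\mathfrak g^p\oplus\mathfrak h$, elements $(x^0,\dots,x^{p-1};y)$ (composable strings of arrows of $\mathfrak g\oplus_{\mathcal L}\mathfrak h$, a Lie algebra with componentwise bracket).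 Face maps $\partial_k:\mathfrak g_{p+1}\to\mathfrak g_p$, $0\le k\le p+1$: $\partial_0(x^0,\dots,x^p;y)=(x^1,\dots,x^p;y)$, $\partial_k(\dots)=(x^0,\dots,x^{k-1}+x^k,\dots,x^p;y)$ ($0<k\le p$), $\partial_{p+1}(\dots)=(x^0,\dots,x^{p-1};y+\mu(x^p))$, componentwise on tuples. $X(j)$: removal of the $j$th entry. $C^{p,q}_r=\bigwedge^q\mathfrak g_p^*\otimes\bigwedge^r\mathfrak g^*\otimes W$ ($r\ge1$), $C^{p,q}_0=\bigwedge^q\mathfrak g_p^*\otimes V$, elements $\omega(\Xi;Z)$. $\partial:C^{p,q}_r\to C^{p+1,q}_r$, $\partial\omega(\Xi;Z)=\sum_{k=0}^{p+1}(-1)^k\omega(\partial_k\Xi;Z)$. $\Delta:C^{p,q}_r\to C^{p+1,q+1}_{r-1}$ ($r\ge1$): for $\Xi=(\xi_0,\dots,\xi_q)\in\mathfrak g_{p+1}^{q+1}$, $\xi_j=(x_j^0,\dots,x_j^p;y_j)$, $\Delta\omega(\Xi;Z)=\sum_j(-1)^j\omega(\partial_0\Xi(j);x_j^0,Z)$, composed with $\phi$ when $r=1$. *)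

theory Defs
  imports Main "HOL.Real_Vector_Spaces"
begin

section \<open>Lie algebras, crossed modules, 2-representations (over the reals)\<close>

definition lie_algebra :: "('a::real_vector \<Rightarrow> 'a \<Rightarrow> 'a) \<Rightarrow> bool" where
  "lie_algebra br \<longleftrightarrow>
     (\<forall>x. linear (br x)) \<and> (\<forall>y. linear (\<lambda>x. br x y)) \<and>
     (\<forall>x. br x x = 0) \<and>
     (\<forall>x y z. br x (br y z) + br y (br z x) + br z (br x y) = 0)"

definition lie_hom :: "('a::real_vector \<Rightarrow> 'a \<Rightarrow> 'a) \<Rightarrow> ('b::real_vector \<Rightarrow> 'b \<Rightarrow> 'b)
    \<Rightarrow> ('a \<Rightarrow> 'b) \<Rightarrow> bool" where
  "lie_hom bra brb f \<longleftrightarrow> linear f \<and> (\<forall>x y. f (bra x y) = brb (f x) (f y))"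

definition derivation :: "('a::real_vector \<Rightarrow> 'a \<Rightarrow> 'a) \<Rightarrow> ('a \<Rightarrow> 'a) \<Rightarrow> bool" where
  "derivation br D \<longleftrightarrow> linear D \<and> (\<forall>x y. D (br x y) = br (D x) y + br x (D y))"

text \<open>Crossed module \<open>\<mu> : g \<rightarrow> h\<close> with action \<open>L : h \<rightarrow> Der(g)\<close> (a Lie algebra homomorphism).\<close>
definition crossed_module :: "('g::real_vector \<Rightarrow> 'g \<Rightarrow> 'g) \<Rightarrow> ('h::real_vector \<Rightarrow> 'h \<Rightarrow> 'h)
    \<Rightarrow> ('g \<Rightarrow> 'h) \<Rightarrow> ('h \<Rightarrow> 'g \<Rightarrow> 'g) \<Rightarrow> bool" where
  "crossed_module brg brh \<mu> L \<longleftrightarrow>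
     lie_algebra brg \<and> lie_algebra brh \<and> lie_hom brg brh \<mu> \<and>
     (\<forall>x. linear (\<lambda>y. L y x)) \<and> (\<forall>y. derivation brg (L y)) \<and>
     (\<forall>y y' x. L (brh y y') x = L y (L y' x) - L y' (L y x)) \<and>
     (\<forall>y x. \<mu> (L y x) = brh y (\<mu> x)) \<and>
     (\<forall>x0 x1. L (\<mu> x0) x1 = brg x0 x1)"

text \<open>2-representation of the crossed module on the 2-term complex \<open>\<phi> : W \<rightarrow> V\<close>.\<close>
definition two_rep :: "('g::real_vector \<Rightarrow> 'g \<Rightarrow> 'g) \<Rightarrow> ('h::real_vector \<Rightarrow> 'h \<Rightarrow> 'h)
    \<Rightarrow> ('g \<Rightarrow> 'h) \<Rightarrow> ('h \<Rightarrow> 'g \<Rightarrow> 'g) \<Rightarrow> ('w::real_vector \<Rightarrow> 'v::real_vector)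
    \<Rightarrow> ('h \<Rightarrow> 'w \<Rightarrow> 'w) \<Rightarrow> ('h \<Rightarrow> 'v \<Rightarrow> 'v) \<Rightarrow> ('g \<Rightarrow> 'v \<Rightarrow> 'w) \<Rightarrow> bool" where
  "two_rep brg brh \<mu> L \<phi> \<rho>01 \<rho>00 \<rho>1 \<longleftrightarrow>
     linear \<phi> \<and>
     (\<forall>w. linear (\<lambda>a. \<rho>01 a w)) \<and> (\<forall>y. linear (\<rho>01 y)) \<and>
     (\<forall>v. linear (\<lambda>a. \<rho>00 a v)) \<and> (\<forall>y. linear (\<rho>00 y)) \<and>
     (\<forall>v. linear (\<lambda>a. \<rho>1 a v)) \<and> (\<forall>x. linear (\<rho>1 x)) \<and>
     (\<forall>y y' w. \<rho>01 (brh y y') w = \<rho>01 y (\<rho>01 y' w) - \<rho>01 y' (\<rho>01 y w)) \<and>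
     (\<forall>y y' v. \<rho>00 (brh y y') v = \<rho>00 y (\<rho>00 y' v) - \<rho>00 y' (\<rho>00 y v)) \<and>
     (\<forall>y w. \<phi> (\<rho>01 y w) = \<rho>00 y (\<phi> w)) \<and>
     (\<forall>x0 x1 v. \<rho>1 (brg x0 x1) v = \<rho>1 x0 (\<phi> (\<rho>1 x1 v)) - \<rho>1 x1 (\<phi> (\<rho>1 x0 v))) \<and>
     (\<forall>x v. \<rho>00 (\<mu> x) v = \<phi> (\<rho>1 x v)) \<and>
     (\<forall>x w. \<rho>01 (\<mu> x) w = \<rho>1 x (\<phi> w)) \<and>
     (\<forall>y x v. \<rho>1 (L y x) v = \<rho>01 y (\<rho>1 x v) - \<rho>1 x (\<rho>00 y v))"

section \<open>The simplicial spaces \<open>g_p\<close> and their face maps\<close>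

text \<open>An element \<open>(x^0,\<dots>,x^{p-1}; y)\<close> of \<open>g_p = g^p \<oplus> h\<close> is a pair (list of length p, y);
  \<open>g_0 = h\<close> corresponds to the pairs with empty list.\<close>

definition gp :: "nat \<Rightarrow> ('g list \<times> 'h) set" where
  "gp p = {\<xi>. length (fst \<xi>) = p}"

definition gp_add :: "('g::real_vector list \<times> 'h::real_vector) \<Rightarrow> ('g list \<times> 'h) \<Rightarrow> ('g list \<times> 'h)" where
  "gp_add a b = (map2 (+) (fst a) (fst b), snd a + snd b)"

definition gp_scale :: "real \<Rightarrow> ('g::real_vector list \<times> 'h::real_vector) \<Rightarrow> ('g list \<times> 'h)" where
  "gp_scale c a = (map (scaleR c) (fst a), scaleR c (snd a))"

text \<open>Face map \<open>\<partial>_k : g_{p+1} \<rightarrow> g_p\<close>, applied to \<open>(x^0,\<dots>,x^p; y)\<close> (list of length n = p+1).\<close>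
definition face :: "('g::real_vector \<Rightarrow> 'h::real_vector) \<Rightarrow> nat \<Rightarrow> ('g list \<times> 'h) \<Rightarrow> ('g list \<times> 'h)" where
  "face \<mu> k \<xi> =
     (let xs = fst \<xi>; y = snd \<xi> in
      if k = 0 then (tl xs, y)
      else if k < length xs then (take (k - 1) xs @ [xs ! (k - 1) + xs ! k] @ drop (k + 1) xs, y)
      else (butlast xs, y + \<mu> (last xs)))"

text \<open>\<open>X(j)\<close>: removal of the j-th entry.\<close>
definition remove_nth :: "nat \<Rightarrow> 'a list \<Rightarrow> 'a list" where
  "remove_nth j xs = take j xs @ drop (Suc j) xs"

section \<open>Cochains\<close>

text \<open>Multilinear alternating functions of n arguments from a carrier D with given addition/scaling.\<close>
definition multilin_alt :: "'a set \<Rightarrow> ('a \<Rightarrow> 'a \<Rightarrow> 'a) \<Rightarrow> (real \<Rightarrow> 'a \<Rightarrow> 'a) \<Rightarrow> nat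
    \<Rightarrow> ('a list \<Rightarrow> 'b::real_vector) \<Rightarrow> bool" where
  "multilin_alt D add sc n f \<longleftrightarrow>
     (\<forall>xs i a b. length xs = n \<and> set xs \<subseteq> D \<and> i < n \<and> a \<in> D \<and> b \<in> D \<longrightarrow>
        f (xs[i := add a b]) = f (xs[i := a]) + f (xs[i := b])) \<and>
     (\<forall>xs i c a. length xs = n \<and> set xs \<subseteq> D \<and> i < n \<and> a \<in> D \<longrightarrow>
        f (xs[i := sc c a]) = c *\<^sub>R f (xs[i := a])) \<and>
     (\<forall>xs i j. length xs = n \<and> set xs \<subseteq> D \<and> i < n \<and> j < n \<and> i \<noteq> j \<and> xs ! i = xs ! j \<longrightarrow>
        f xs = 0)"

text \<open>\<open>\<omega> \<in> C^{p,q}_r\<close>: \<open>\<omega>(\<Xi>;Z)\<close> with \<open>\<Xi>\<close> a q-tuple in \<open>g_p\<close> and Z an r-tuple in g,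
  alternating multilinear in each group of arguments (values in W for \<open>r \<ge> 1\<close>, in V for r = 0).\<close>
definition cochain :: "nat \<Rightarrow> nat \<Rightarrow> nat
    \<Rightarrow> (('g::real_vector list \<times> 'h::real_vector) list \<Rightarrow> 'g list \<Rightarrow> 'w::real_vector) \<Rightarrow> bool" where
  "cochain p q r \<omega> \<longleftrightarrow>
     (\<forall>Z. length Z = r \<longrightarrow> multilin_alt (gp p) gp_add gp_scale q (\<lambda>\<Xi>. \<omega> \<Xi> Z)) \<and>
     (\<forall>\<Xi>. length \<Xi> = q \<and> set \<Xi> \<subseteq> gp p \<longrightarrow> multilin_alt UNIV (+) (*\<^sub>R) r (\<lambda>Z. \<omega> \<Xi> Z))"

text \<open>\<open>\<partial> : C^{p,q}_r \<rightarrow> C^{p+1,q}_r\<close>.\<close>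
definition bdry :: "('g::real_vector \<Rightarrow> 'h::real_vector) \<Rightarrow> nat
    \<Rightarrow> (('g list \<times> 'h) list \<Rightarrow> 'g list \<Rightarrow> 'w::real_vector)
    \<Rightarrow> (('g list \<times> 'h) list \<Rightarrow> 'g list \<Rightarrow> 'w)" where
  "bdry \<mu> p \<omega> \<Xi> Z = (\<Sum>k = 0..p + 1. ((-1::real) ^ k) *\<^sub>R \<omega> (map (face \<mu> k) \<Xi>) Z)"

text \<open>\<open>\<Delta> : C^{p,q}_r \<rightarrow> C^{p+1,q+1}_{r-1}\<close> (before composing with \<open>\<phi>\<close>, which is done when r = 1).\<close>
definition Delta :: "('g::real_vector \<Rightarrow> 'h::real_vector)
    \<Rightarrow> (('g list \<times> 'h) list \<Rightarrow> 'g list \<Rightarrow> 'w::real_vector)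
    \<Rightarrow> (('g list \<times> 'h) list \<Rightarrow> 'g list \<Rightarrow> 'w)" where
  "Delta \<mu> \<omega> \<Xi> Z = (\<Sum>j < length \<Xi>. ((-1::real) ^ j) *\<^sub>R
        \<omega> (map (face \<mu> 0) (remove_nth j \<Xi>)) (hd (fst (\<Xi> ! j)) # Z))"

end

theory Submission
  imports Defs
begin


lemma map_remove_nth: "map f (remove_nth j xs) = remove_nth j (map f xs)"
  by (simp add: remove_nth_def take_map drop_map)

lemma length_remove_nth: "j < length xs \<Longrightarrow> length (remove_nth j xs) = length xs - 1"
  by (simp add: remove_nth_def)

lemma set_remove_nth: "set (remove_nth j xs) \<subseteq> set xs"
  by (auto simp: remove_nth_def dest: in_set_takeD in_set_dropD)

lemma face_len: "length xs \<ge> 1 \<Longrightarrow> length (fst (face \<mu> k (xs, y))) = length xs - 1"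
  by (auto simp: face_def Let_def min_def)

lemma face0_facek:
  assumes "length xs = p + 2" "2 \<le> k" "k \<le> p + 2"
  shows "face \<mu> 0 (face \<mu> k (xs, y)) = face \<mu> (k - 1) (face \<mu> 0 (xs, y))"
proof -
  obtain a b ys where xs: "xs = a # b # ys" using assms(1)
    by (cases xs; cases "tl xs"; auto)
  obtain m where k: "k = Suc (Suc m)" using assms(2) by (metis add_2_eq_Suc le_Suc_ex)
  show ?thesis
  proof (cases "k < p + 2")
    case True
    then show ?thesis using assms xs k by (simp add: face_def Let_def)
  next
    case False
    then show ?thesis using assms xs k by (simp add: face_def Let_def)
  qed
qed

lemma hd_facek:
  assumes "length xs = p + 2" "2 \<le> k"
  shows "hd (fst (face \<mu> k (xs, y))) = hd xs"
proof -
  obtain a b ys where xs: "xs = a # b # ys" using assms(1)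
    by (cases xs; cases "tl xs"; auto)
  obtain m where k: "k = Suc (Suc m)" using assms(2) by (metis add_2_eq_Suc le_Suc_ex)
  show ?thesis using assms xs k by (simp add: face_def Let_def)
qed

lemma face01:
  assumes "length xs = p + 2"
  shows "face \<mu> 0 (face \<mu> 1 (xs, y)) = face \<mu> 0 (face \<mu> 0 (xs, y))"
    "hd (fst (face \<mu> 1 (xs, y))) = hd xs + hd (tl xs)"
    "hd (fst (face \<mu> 0 (xs, y))) = hd (tl xs)"
proof -
  obtain a b ys where xs: "xs = a # b # ys" using assms(1)
    by (cases xs; cases "tl xs"; auto)
  show "face \<mu> 0 (face \<mu> 1 (xs, y)) = face \<mu> 0 (face \<mu> 0 (xs, y))"
    "hd (fst (face \<mu> 1 (xs, y))) = hd xs + hd (tl xs)"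
    "hd (fst (face \<mu> 0 (xs, y))) = hd (tl xs)"
    using xs by (simp_all add: face_def Let_def)
qed

lemma cochain_add:
  assumes "cochain p q r \<omega>" "r \<ge> 1" "length X = q" "set X \<subseteq> gp p" "length Z = r - 1"
  shows "\<omega> X ((a + b) # Z) = \<omega> X (a # Z) + \<omega> X (b # Z)"
proof -
  have "multilin_alt UNIV (+) (*\<^sub>R) r (\<lambda>Z. \<omega> X Z)" using assms unfolding cochain_def by blast

  from \<open>multilin_alt _ _ _ _ _\<close> have "\<omega> X ((a # Z)[0 := a + b]) = \<omega> X ((a # Z)[0 := a]) + \<omega> X ((a # Z)[0 := b])"
    unfolding multilin_alt_def using assms by (elim conjE allE[of _ "a # Z"]) auto
  then show ?thesis by simp
qed

lemma key:
  assumes co: "cochain p q r \<omega>" and r: "r \<ge> 1" and lx: "length \<Xi> = q + 1"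
    and sx: "set \<Xi> \<subseteq> gp (p + 2)" and lz: "length Z = r - 1"
  shows "bdry \<mu> (p + 1) (Delta \<mu> \<omega>) \<Xi> Z + Delta \<mu> (bdry \<mu> p \<omega>) \<Xi> Z = 0"
proof -
  define n where "n = length \<Xi>"
  define A where "A k j = \<omega> (remove_nth j (map (face \<mu> 0 \<circ> face \<mu> k) \<Xi>)) (hd (fst (face \<mu> k (\<Xi>!j))) # Z)" for k j
  define B where "B k j = \<omega> (remove_nth j (map (face \<mu> k \<circ> face \<mu> 0) \<Xi>)) (hd (fst (\<Xi>!j)) # Z)" for k j
  have L1: "bdry \<mu> (p + 1) (Delta \<mu> \<omega>) \<Xi> Z = (\<Sum>j<n. ((-1::real)^j) *\<^sub>R (\<Sum>k=0..p+2. ((-1::real)^k) *\<^sub>R A k j))"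
  proof -
    have "bdry \<mu> (p + 1) (Delta \<mu> \<omega>) \<Xi> Z = (\<Sum>k=0..p+2. \<Sum>j<n. ((-1::real)^k) *\<^sub>R (((-1::real)^j) *\<^sub>R A k j))"
      unfolding bdry_def Delta_def A_def n_def
      by (rule sum.cong) (auto simp: map_remove_nth scaleR_sum_right intro!: sum.cong)
    also have "\<dots> = (\<Sum>j<n. \<Sum>k=0..p+2. ((-1::real)^k) *\<^sub>R (((-1::real)^j) *\<^sub>R A k j))"
      by (rule sum.swap)
    also have "\<dots> = (\<Sum>j<n. ((-1::real)^j) *\<^sub>R (\<Sum>k=0..p+2. ((-1::real)^k) *\<^sub>R A k j))"
      by (simp only: scaleR_sum_right scaleR_scaleR mult.commute)
    finally show ?thesis .
  qed
  have L2: "Delta \<mu> (bdry \<mu> p \<omega>) \<Xi> Z = (\<Sum>j<n. ((-1::real)^j) *\<^sub>R (\<Sum>k=0..p+1. ((-1::real)^k) *\<^sub>R B k j))"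
    unfolding bdry_def Delta_def B_def n_def
    by (simp add: map_remove_nth)
  have J: "(\<Sum>k=0..p+2. ((-1::real)^k) *\<^sub>R A k j) + (\<Sum>k=0..p+1. ((-1::real)^k) *\<^sub>R B k j) = 0"
    if j: "j < n" for j
  proof -
    obtain xs y where xj: "\<Xi> ! j = (xs, y)" by (cases "\<Xi> ! j")
    have inj: "\<Xi> ! j \<in> gp (p+2)" using sx j n_def by auto
    hence lxs: "length xs = p + 2" using xj by (simp add: gp_def)
    have gen: "set (remove_nth j (map g \<Xi>)) \<subseteq> gp p \<and> length (remove_nth j (map g \<Xi>)) = q"
      if "\<And>\<xi>. \<xi> \<in> gp (p+2) \<Longrightarrow> g \<xi> \<in> gp p" for g
    proof
      have "set (map g \<Xi>) \<subseteq> gp p" using that sx by auto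
      then show "set (remove_nth j (map g \<Xi>)) \<subseteq> gp p" using set_remove_nth[of j "map g \<Xi>"] by blast
      show "length (remove_nth j (map g \<Xi>)) = q" using length_remove_nth[of j "map g \<Xi>"] j lx n_def by simp
    qed
    have fl: "\<xi> \<in> gp (p+2) \<Longrightarrow> face \<mu> k \<xi> \<in> gp (p+1)" for \<xi> k
      by (cases \<xi>) (simp add: gp_def face_len)
    have fl1: "\<xi> \<in> gp (p+1) \<Longrightarrow> face \<mu> k \<xi> \<in> gp p" for \<xi> k
      by (cases \<xi>) (simp add: gp_def face_len)
    have AB: "A (Suc k) j = B k j" if "1 \<le> k" "k \<le> p + 1" for k
    proof -
      have "map (face \<mu> 0 \<circ> face \<mu> (Suc k)) \<Xi> = map (face \<mu> k \<circ> face \<mu> 0) \<Xi>"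
      proof (rule map_cong[OF refl])
        fix \<xi> assume "\<xi> \<in> set \<Xi>"
        then have "length (fst \<xi>) = p + 2" using sx by (auto simp: gp_def)
        then show "(face \<mu> 0 \<circ> face \<mu> (Suc k)) \<xi> = (face \<mu> k \<circ> face \<mu> 0) \<xi>"
          using face0_facek[of "fst \<xi>" p "Suc k" \<mu> "snd \<xi>"] that by simp
      qed
      moreover have "hd (fst (face \<mu> (Suc k) (\<Xi>!j))) = hd (fst (\<Xi>!j))"
        using hd_facek[OF lxs, of "Suc k"] that xj by simp
      ultimately show ?thesis unfolding A_def B_def by (simp only:)
    qed
    have m01: "map (face \<mu> 0 \<circ> face \<mu> 1) \<Xi> = map (face \<mu> 0 \<circ> face \<mu> 0) \<Xi>"
    proof (rule map_cong[OF refl])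
      fix \<xi> assume "\<xi> \<in> set \<Xi>"
      then have "length (fst \<xi>) = p + 2" using sx by (auto simp: gp_def)
      then show "(face \<mu> 0 \<circ> face \<mu> 1) \<xi> = (face \<mu> 0 \<circ> face \<mu> 0) \<xi>"
        using face01(1)[of "fst \<xi>" p \<mu> "snd \<xi>"] by simp
    qed
    have A01: "A 0 j - A 1 j + B 0 j = 0"
    proof -
      let ?X = "remove_nth j (map (face \<mu> 0 \<circ> face \<mu> 0) \<Xi>)"
      have X: "set ?X \<subseteq> gp p" "length ?X = q"
        using gen[of "face \<mu> 0 \<circ> face \<mu> 0"] fl fl1 by auto
      have "A 1 j = \<omega> ?X ((hd xs + hd (tl xs)) # Z)"
        unfolding A_def by (simp only: m01 xj face01(2)[OF lxs])
      also have "\<dots> = \<omega> ?X (hd xs # Z) + \<omega> ?X (hd (tl xs) # Z)"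
        by (rule cochain_add[OF co r X(2) X(1) lz])
      finally have "A 1 j = \<omega> ?X (hd xs # Z) + \<omega> ?X (hd (tl xs) # Z)" .
      moreover have "A 0 j = \<omega> ?X (hd (tl xs) # Z)"
        unfolding A_def by (simp only: xj face01(3)[OF lxs])
      moreover have "B 0 j = \<omega> ?X (hd xs # Z)"
        unfolding B_def using xj by simp
      ultimately show ?thesis by simp
    qed
    have S1: "(\<Sum>k=0..p+2. ((-1::real)^k) *\<^sub>R A k j) = A 0 j - A 1 j + (\<Sum>k=1..p+1. ((-1::real)^Suc k) *\<^sub>R A (Suc k) j)"
    proof -
      have "(\<Sum>k=0..p+2. ((-1::real)^k) *\<^sub>R A k j) = A 0 j + (\<Sum>k=Suc 0..p+2. ((-1::real)^k) *\<^sub>R A k j)"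
        by (simp add: sum.atLeast_Suc_atMost)
      also have "(\<Sum>k=Suc 0..p+2. ((-1::real)^k) *\<^sub>R A k j) = - A 1 j + (\<Sum>k=Suc (Suc 0)..p+2. ((-1::real)^k) *\<^sub>R A k j)"
        by (simp add: sum.atLeast_Suc_atMost)
      also have "(\<Sum>k=Suc (Suc 0)..p+2. ((-1::real)^k) *\<^sub>R A k j) = (\<Sum>k=1..p+1. ((-1::real)^Suc k) *\<^sub>R A (Suc k) j)"
        using sum.shift_bounds_cl_Suc_ivl[of "\<lambda>k. ((-1::real)^k) *\<^sub>R A k j" 1 "p+1"] by simp
      finally show ?thesis by simp
    qed
    have S2: "(\<Sum>k=0..p+1. ((-1::real)^k) *\<^sub>R B k j) = B 0 j + (\<Sum>k=1..p+1. ((-1::real)^k) *\<^sub>R B k j)"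
      by (simp add: sum.atLeast_Suc_atMost)
    have S3: "(\<Sum>k=1..p+1. ((-1::real)^Suc k) *\<^sub>R A (Suc k) j) = - (\<Sum>k=1..p+1. ((-1::real)^k) *\<^sub>R B k j)"
      by (simp add: AB sum_negf[symmetric])
    have ar: "A 0 j - A 1 j + - S + (B 0 j + S) = A 0 j - A 1 j + B 0 j" for S
      by (simp add: algebra_simps)
    show ?thesis unfolding S1 S2 S3 ar A01 by (rule refl)
  qed
  have "bdry \<mu> (p + 1) (Delta \<mu> \<omega>) \<Xi> Z + Delta \<mu> (bdry \<mu> p \<omega>) \<Xi> Z
      = (\<Sum>j<n. ((-1::real)^j) *\<^sub>R ((\<Sum>k=0..p+2. ((-1::real)^k) *\<^sub>R A k j) + (\<Sum>k=0..p+1. ((-1::real)^k) *\<^sub>R B k j)))"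
    unfolding L1 L2 by (simp add: sum.distrib scaleR_right_distrib)
  also have "\<dots> = 0" using J by simp
  finally show ?thesis .
qed



theorem mainTheorem11:
  fixes brg :: "'g::real_vector \<Rightarrow> 'g \<Rightarrow> 'g" and brh :: "'h::real_vector \<Rightarrow> 'h \<Rightarrow> 'h"
    and \<mu> :: "'g \<Rightarrow> 'h" and L :: "'h \<Rightarrow> 'g \<Rightarrow> 'g"
    and \<phi> :: "'w::real_vector \<Rightarrow> 'v::real_vector"
    and \<rho>01 :: "'h \<Rightarrow> 'w \<Rightarrow> 'w" and \<rho>00 :: "'h \<Rightarrow> 'v \<Rightarrow> 'v" and \<rho>1 :: "'g \<Rightarrow> 'v \<Rightarrow> 'w"
    and \<omega> :: "('g list \<times> 'h) list \<Rightarrow> 'g list \<Rightarrow> 'w"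
    and p q r :: nat
  assumes "crossed_module brg brh \<mu> L"
    and "two_rep brg brh \<mu> L \<phi> \<rho>01 \<rho>00 \<rho>1"
    and "r \<ge> 1"
    and "cochain p q r \<omega>"
  shows "\<forall>\<Xi> Z. length \<Xi> = q + 1 \<and> set \<Xi> \<subseteq> gp (p + 2) \<and> length Z = r - 1 \<longrightarrow>
           (if r = 1 then
              bdry \<mu> (p + 1) (\<lambda>\<Xi>' Z'. \<phi> (Delta \<mu> \<omega> \<Xi>' Z')) \<Xi> Z
                + \<phi> (Delta \<mu> (bdry \<mu> p \<omega>) \<Xi> Z) = 0
            else
              bdry \<mu> (p + 1) (Delta \<mu> \<omega>) \<Xi> Z + Delta \<mu> (bdry \<mu> p \<omega>) \<Xi> Z = 0)"
proof (intro allI impI)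
  fix \<Xi> :: "('g list \<times> 'h) list" and Z :: "'g list"
  assume h: "length \<Xi> = q + 1 \<and> set \<Xi> \<subseteq> gp (p + 2) \<and> length Z = r - 1"
  have K: "bdry \<mu> (p + 1) (Delta \<mu> \<omega>) \<Xi> Z + Delta \<mu> (bdry \<mu> p \<omega>) \<Xi> Z = 0"
    using key[OF assms(4) assms(3)] h by blast
  have lin: "linear \<phi>" using assms(2) unfolding two_rep_def by blast
  have "bdry \<mu> (p + 1) (\<lambda>\<Xi>' Z'. \<phi> (Delta \<mu> \<omega> \<Xi>' Z')) \<Xi> Z
      = \<phi> (bdry \<mu> (p + 1) (Delta \<mu> \<omega>) \<Xi> Z)"
    unfolding bdry_def by (simp only: linear_sum[OF lin] linear_scale[OF lin])
  then have "bdry \<mu> (p + 1) (\<lambda>\<Xi>' Z'. \<phi> (Delta \<mu> \<omega> \<Xi>' Z')) \<Xi> Z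
                + \<phi> (Delta \<mu> (bdry \<mu> p \<omega>) \<Xi> Z) = \<phi> 0"
    using K by (simp add: linear_add[OF lin, symmetric])
  then show "(if r = 1 then
              bdry \<mu> (p + 1) (\<lambda>\<Xi>' Z'. \<phi> (Delta \<mu> \<omega> \<Xi>' Z')) \<Xi> Z
                + \<phi> (Delta \<mu> (bdry \<mu> p \<omega>) \<Xi> Z) = 0
            else
              bdry \<mu> (p + 1) (Delta \<mu> \<omega>) \<Xi> Z + Delta \<mu> (bdry \<mu> p \<omega>) \<Xi> Z = 0)"
    using K linear_0[OF lin] by simp
qed

end
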